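(* Consider the Lur'e system described in the context, with $x(0)=0$, and let $\bar y\in\mathbf{R}^m$ be a given output constraint. Suppose there exist $\bar u\in\mathbf{R}^n$, $\bar u\ge0$, and $\bar z\in\mathbf{R}^\ell$, $\bar z>0$, such that $$\gamma_{z,u}\bar u<(I-\gamma_{z,v}\gamma_\psi(\bar z))\bar z,\qquad \gamma_{y,u}\bar u+\gamma_{y,v}\gamma_\psi(\bar z)\bar z\le\bar y.$$ Then the system is CICO stable: every input $u$ with $\lvert u\rvert_{\mathcal{L}_\infty^n}\le\bar u$ produces $\lvert z\rvert_{\mathcal{L}_\infty^\ell}\le\bar z$ and $\lvert y\rvert_{\mathcal{L}_\infty^m}\le\bar y$.
   Context: Lur'e system: matrices $A\in\mathbf{R}^{N\times N}$, $B_u\in\mathbf{R}^{N\times n}$, $B_v\in\mathbf{R}^{N\times\ell}$, $C_y\in\mathbf{R}^{m\times N}$, $C_z\in\mathbf{R}^{\ell\times N}$, and $\varphi^*\in\mathbf{R}^\ell$ are given; the dynamics are $\dot x=Ax+B_v v+B_u u$, $y=C_y x$, $z=C_z x$, $v=\psi(z)$ with $\psi_i(z_i)=\sin(\varphi^*_i+z_i)-\sin\varphi^*_i-\cos(\varphi^*_i)z_i$, input $u:[0,\infty)\to\mathbf{R}^n$ measurable. It is assumed that for $i\in\{y,z\}$, $j\in\{u,v\}$ the impulse response $h^{i,j}(t)=C_ie^{At}B_j$ ($t\ge0$) has absolutely integrable entries; the gain matrices $\gamma_{i,j}$ have entries $[\gamma_{i,j}]_{pq}=\int_0^\infty|h^{i,j}_{pq}(\tau)|d\tau$.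 For $\bar z>0$, $\gamma_\psi(\bar z)$ is the diagonal matrix with $\gamma_{\psi,ii}(\bar z_i)=\sup_{0<|z_i|\le\bar z_i}\left|\frac{\sin(\varphi^*_i+z_i)-\sin\varphi^*_i}{z_i}-\cos\varphi^*_i\right|$. The element-wise $\mathcal{L}$-infinity norm $\lvert w\rvert_{\mathcal{L}_\infty^k}$ of $w:[0,\infty)\to\mathbf{R}^k$ has entries $\sup_{t\ge0}|w_i(t)|$. CICO stability: given $\bar y$, there exists $\bar u$ such that every input with $\lvert u\rvert_{\mathcal{L}_\infty^n}\le\bar u$ yields $\lvert y\rvert_{\mathcal{L}_\infty^m}\le\bar y$. Inequalities are componentwise. *)

theory Defs
  imports "HOL-Analysis.Analysis"
begin

primrec matpow :: "real^'n^'n \<Rightarrow> nat \<Rightarrow> real^'n^'n" where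
  "matpow M 0 = mat 1"
| "matpow M (Suc k) = M ** matpow M k"

definition mat_exp :: "real^'n^'n \<Rightarrow> real^'n^'n" where
  "mat_exp M = (\<Sum>k. (1 / fact k) *\<^sub>R matpow M k)"

definition impulse :: "real^'N^'i \<Rightarrow> real^'N^'N \<Rightarrow> real^'j^'N \<Rightarrow> real \<Rightarrow> real^'j^'i" where
  "impulse C A B t = C ** mat_exp (t *\<^sub>R A) ** B"

definition gain :: "real^'N^'i \<Rightarrow> real^'N^'N \<Rightarrow> real^'j^'N \<Rightarrow> real^'j^'i" where
  "gain C A B = (\<chi> p q. integral {0..} (\<lambda>t. \<bar>impulse C A B t $ p $ q\<bar>))"

definition psi :: "real^'l \<Rightarrow> real^'l \<Rightarrow> real^'l" where
  "psi phis z = (\<chi> i. sin (phis$i + z$i) - sin (phis$i) - cos (phis$i) * z$i)"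

definition gamma_psi :: "real^'l \<Rightarrow> real^'l \<Rightarrow> real^'l^'l" where
  "gamma_psi phis zbar = (\<chi> i j. if i = j then
      Sup {\<bar>(sin (phis$i + s) - sin (phis$i)) / s - cos (phis$i)\<bar> | s. 0 < \<bar>s\<bar> \<and> \<bar>s\<bar> \<le> zbar$i}
    else 0)"

definition linf :: "(real \<Rightarrow> real^'k) \<Rightarrow> 'k \<Rightarrow> ereal" where
  "linf w i = (SUP t\<in>{0..}. ereal \<bar>w t $ i\<bar>)"

definition linf_le :: "(real \<Rightarrow> real^'k) \<Rightarrow> real^'k \<Rightarrow> bool" where
  "linf_le w b \<longleftrightarrow> (\<forall>i. linf w i \<le> ereal (b $ i))"

(* Caratheodory solution on [0,\<infinity>) of the Lur'e system with x(0)=0 *)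
definition lure_solution ::
  "real^'N^'N \<Rightarrow> real^'n^'N \<Rightarrow> real^'l^'N \<Rightarrow> real^'N^'l \<Rightarrow> real^'l
   \<Rightarrow> (real \<Rightarrow> real^'n) \<Rightarrow> (real \<Rightarrow> real^'N) \<Rightarrow> bool" where
  "lure_solution A Bu Bv Cz phis u x \<longleftrightarrow>
     x 0 = 0 \<and>
     (\<forall>t\<ge>0. (\<lambda>s. A *v x s + Bv *v psi phis (Cz *v x s) + Bu *v u s) absolutely_integrable_on {0..t} \<and>
       ((\<lambda>s. A *v x s + Bv *v psi phis (Cz *v x s) + Bu *v u s) has_integral x t) {0..t})"

end

theory Submission
  imports Defs
begin
lemma matpow_scaleR: "matpow (c *\<^sub>R M) k = c^k *\<^sub>R matpow M k"
proof (induction k)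
  case 0 show ?case by simp
next
  case (Suc k)
  have "matpow (c *\<^sub>R M) (Suc k) = (c *\<^sub>R M) ** (c^k *\<^sub>R matpow M k)"
    by (simp only: matpow.simps Suc)
  also have "\<dots> = (c * c^k) *\<^sub>R (M ** matpow M k)"
    by (simp only: scalar_matrix_assoc[symmetric] matrix_scalar_ac scaleR_scaleR mult.commute)
  finally show ?case by simp
qed

lemma matpow_commute: "matpow M k ** M = M ** matpow M k"
proof (induction k)
  case 0 show ?case by (simp add: matrix_mul_lid matrix_mul_rid)
next
  case (Suc k)
  have "matpow M (Suc k) ** M = M ** (matpow M k ** M)"
    by (simp only: matpow.simps matrix_mul_assoc)
  also have "\<dots> = M ** matpow M (Suc k)" by (simp only: Suc matpow.simps)
  finally show ?case .
qed

lemma matpow_Suc': "matpow M (Suc k) = matpow M k ** M"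
  by (simp only: matpow_commute matpow.simps)

definition msum :: "real^'n^'n \<Rightarrow> real" where
  "msum M = (\<Sum>a\<in>UNIV. \<Sum>b\<in>UNIV. \<bar>M $ a $ b\<bar>)"

lemma msum_nonneg: "0 \<le> msum M"
  unfolding msum_def by (intro sum_nonneg abs_ge_zero)

lemma row_le_msum: "(\<Sum>l\<in>UNIV. \<bar>M $ i $ l\<bar>) \<le> msum M"
  unfolding msum_def
  by (rule member_le_sum[where f="\<lambda>a. \<Sum>b\<in>UNIV. \<bar>M $ a $ b\<bar>"]) (auto intro: sum_nonneg)

lemma matpow_entry_bound: "\<bar>matpow M k $ i $ j\<bar> \<le> msum M ^ k"
proof (induction k arbitrary: i j)
  case 0
  then show ?case by (simp add: mat_def)
next
  case (Suc k)
  have "\<bar>matpow M (Suc k) $ i $ j\<bar> = \<bar>\<Sum>l\<in>UNIV. M $ i $ l * matpow M k $ l $ j\<bar>"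
    by (simp only: matpow.simps matrix_matrix_mult_def vec_lambda_beta)
  also have "\<dots> \<le> (\<Sum>l\<in>UNIV. \<bar>M $ i $ l * matpow M k $ l $ j\<bar>)"
    by (rule sum_abs)
  also have "\<dots> \<le> (\<Sum>l\<in>UNIV. \<bar>M $ i $ l\<bar> * msum M ^ k)"
    by (intro sum_mono) (simp only: abs_mult mult_left_mono Suc abs_ge_zero)
  also have "\<dots> = (\<Sum>l\<in>UNIV. \<bar>M $ i $ l\<bar>) * msum M ^ k"
    by (simp only: sum_distrib_right)
  also have "\<dots> \<le> msum M * msum M ^ k"
    by (intro mult_right_mono row_le_msum zero_le_power msum_nonneg)
  finally show ?case by (simp only: power_Suc)
qed

lemma summable_entry: "summable (\<lambda>k. matpow M k $ i $ j / fact k * y ^ k)"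
proof (rule summable_comparison_test[OF _ summable_exp[of "msum M * \<bar>y\<bar>"]])
  show "\<exists>N. \<forall>n\<ge>N. norm (matpow M n $ i $ j / fact n * y ^ n) \<le> inverse (fact n) * (msum M * \<bar>y\<bar>) ^ n"
  proof (intro exI[of _ 0] allI impI)
    fix n :: nat
    have a: "\<bar>matpow M n $ i $ j\<bar> * \<bar>y\<bar> ^ n \<le> msum M ^ n * \<bar>y\<bar> ^ n"
      by (intro mult_right_mono matpow_entry_bound zero_le_power abs_ge_zero)
    have "norm (matpow M n $ i $ j / fact n * y ^ n) = (\<bar>matpow M n $ i $ j\<bar> * \<bar>y\<bar> ^ n) / fact n"
      by (simp add: abs_mult power_abs)
    also have "\<dots> \<le> (msum M ^ n * \<bar>y\<bar> ^ n) / fact n"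
      by (rule divide_right_mono[OF a]) simp
    also have "\<dots> = inverse (fact n) * (msum M * \<bar>y\<bar>) ^ n"
      by (simp add: power_mult_distrib divide_inverse mult.commute)
    finally show "norm (matpow M n $ i $ j / fact n * y ^ n) \<le> inverse (fact n) * (msum M * \<bar>y\<bar>) ^ n" .
  qed
qed

lemma mat_exp_sums: "(\<lambda>k. (1 / fact k) *\<^sub>R matpow M k) sums (\<chi> i j. \<Sum>k. matpow M k $ i $ j / fact k)"
  unfolding sums_def
proof (intro vec_tendstoI)
  fix i j
  have "(\<lambda>k. matpow M k $ i $ j / fact k) sums (\<Sum>k. matpow M k $ i $ j / fact k)"
    using summable_entry[of M i j 1] by (simp add: summable_sums)
  moreover have "(\<Sum>k<n. (1 / fact k) *\<^sub>R matpow M k) $ i $ j = (\<Sum>k<n. matpow M k $ i $ j / fact k)" for n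
    by (simp add: sum_component)
  ultimately show "((\<lambda>n. (\<Sum>k<n. (1 / fact k) *\<^sub>R matpow M k) $ i $ j) \<longlongrightarrow> (\<chi> i j. \<Sum>k. matpow M k $ i $ j / fact k) $ i $ j) sequentially"
    by (simp add: sums_def)
qed

lemma mat_exp_entry: "mat_exp M $ i $ j = (\<Sum>k. matpow M k $ i $ j / fact k)"
proof -
  have "mat_exp M = (\<chi> i j. \<Sum>k. matpow M k $ i $ j / fact k)"
    unfolding mat_exp_def by (rule sums_unique[OF mat_exp_sums, symmetric])
  then show ?thesis by simp
qed

lemma mat_exp_scaled_entry: "mat_exp (t *\<^sub>R A) $ i $ j = (\<Sum>k. matpow A k $ i $ j / fact k * t ^ k)"
  unfolding mat_exp_entry matpow_scaleR by (simp add: mult.commute mult.left_commute)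

lemma mat_exp_deriv:
  "((\<lambda>t. mat_exp (t *\<^sub>R A) $ i $ j) has_real_derivative (mat_exp (t *\<^sub>R A) ** A) $ i $ j) (at t)"
proof -
  let ?c = "\<lambda>k. matpow A k $ i $ j / fact k"
  have D: "((\<lambda>t. \<Sum>k. ?c k * t ^ k) has_real_derivative (\<Sum>n. diffs ?c n * t ^ n)) (at t)"
    by (rule termdiffs_strong_converges_everywhere) (rule summable_entry)
  have dc: "diffs ?c n = matpow A (Suc n) $ i $ j / fact n" for n
    by (simp add: diffs_def fact_Suc del: matpow.simps of_nat_Suc)
  have "diffs ?c n * t ^ n = (\<Sum>l\<in>UNIV. (matpow A n $ i $ l / fact n * t ^ n) * A $ l $ j)" for n
  proof -
    have "diffs ?c n * t ^ n = (\<Sum>l\<in>UNIV. matpow A n $ i $ l * A $ l $ j) / fact n * t ^ n"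
      unfolding dc matpow_Suc' by (simp only: matrix_matrix_mult_def vec_lambda_beta)
    also have "\<dots> = (\<Sum>l\<in>UNIV. (matpow A n $ i $ l / fact n * t ^ n) * A $ l $ j)"
      by (simp only: sum_divide_distrib sum_distrib_right) (simp add: mult_ac)
    finally show ?thesis .
  qed
  then have "(\<Sum>n. diffs ?c n * t ^ n) = (\<Sum>n. \<Sum>l\<in>UNIV. (matpow A n $ i $ l / fact n * t ^ n) * A $ l $ j)"
    by simp
  also have "\<dots> = (\<Sum>l\<in>UNIV. \<Sum>n. (matpow A n $ i $ l / fact n * t ^ n) * A $ l $ j)"
    by (rule suminf_sum) (intro summable_mult2 summable_entry)
  also have "\<dots> = (\<Sum>l\<in>UNIV. mat_exp (t *\<^sub>R A) $ i $ l * A $ l $ j)"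
    by (intro sum.cong refl) (simp only: suminf_mult2[OF summable_entry, symmetric] mat_exp_scaled_entry)
  also have "\<dots> = (mat_exp (t *\<^sub>R A) ** A) $ i $ j"
    by (simp only: matrix_matrix_mult_def vec_lambda_beta)
  finally have eq: "(\<Sum>n. diffs ?c n * t ^ n) = (mat_exp (t *\<^sub>R A) ** A) $ i $ j" .
  have fun_eq: "(\<lambda>t. mat_exp (t *\<^sub>R A) $ i $ j) = (\<lambda>t. \<Sum>k. ?c k * t^k)"
    by (rule ext) (rule mat_exp_scaled_entry)
  show ?thesis unfolding fun_eq eq[symmetric] by (rule D)
qed

lemma mat_exp_isCont: "isCont (\<lambda>t. mat_exp (t *\<^sub>R A) $ i $ j) t"
  by (rule DERIV_isCont[OF mat_exp_deriv])

lemma mat_exp_cont: "continuous_on S (\<lambda>t. mat_exp (t *\<^sub>R A) $ i $ j)"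
  by (intro continuous_at_imp_continuous_on ballI mat_exp_isCont)

lemma mat_exp_zero: "mat_exp (0 *\<^sub>R A) = mat 1"
proof -
  have "mat_exp (0 *\<^sub>R A) $ i $ j = mat 1 $ i $ j" for i j
  proof -
    have "mat_exp (0 *\<^sub>R A) $ i $ j = (\<Sum>k. matpow A k $ i $ j / fact k * 0 ^ k)"
      by (rule mat_exp_scaled_entry)
    also have "\<dots> = (\<Sum>k\<in>{0}. matpow A k $ i $ j / fact k * 0 ^ k)"
      by (rule suminf_finite) auto
    also have "\<dots> = mat 1 $ i $ j" by simp
    finally show ?thesis .
  qed
  then show ?thesis by (simp add: vec_eq_iff)
qed

lemma fubini_tri_L:
  fixes k P :: "real \<Rightarrow> real"
  assumes t: "0 \<le> t" and k: "continuous_on UNIV k"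
    and Pm[measurable]: "P \<in> borel_measurable lborel"
    and Pi: "integrable lborel P" and P0: "\<And>s. s \<notin> {0..t} \<Longrightarrow> P s = 0"
  shows "integrable lborel (\<lambda>r. indicator {0..t} r * k r * (\<integral>s. indicator {0..r} s * P s \<partial>lborel))"
    and "integrable lborel (\<lambda>s. P s * (\<integral>r. indicator {s..t} r * k r \<partial>lborel))"
    and "(\<integral>r. indicator {0..t} r * k r * (\<integral>s. indicator {0..r} s * P s \<partial>lborel) \<partial>lborel)
         = (\<integral>s. P s * (\<integral>r. indicator {s..t} r * k r \<partial>lborel) \<partial>lborel)"
proof -
  have km[measurable]: "k \<in> borel_measurable borel"
    by (rule borel_measurable_continuous_onI[OF k])
  obtain K where K: "K > 0" "\<And>r. r \<in> {0..t} \<Longrightarrow> \<bar>k r\<bar> \<le> K"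
  proof -
    have "bounded (k ` {0..t})"
      by (intro compact_imp_bounded compact_continuous_image continuous_on_subset[OF k]) auto
    then obtain K where "K > 0" "\<And>y. y \<in> k ` {0..t} \<Longrightarrow> norm y \<le> K"
      using bounded_pos by metis
    then show ?thesis using that by auto
  qed
  define G where "G = (\<lambda>r s. if 0 \<le> r \<and> r \<le> t \<and> 0 \<le> s \<and> s \<le> r then k r * P s else (0::real))"
  have Gm[measurable]: "(\<lambda>(r, s). G r s) \<in> borel_measurable (lborel \<Otimes>\<^sub>M lborel)"
    unfolding G_def by measurable
  have Gb: "\<bar>G r s\<bar> \<le> K * \<bar>P s\<bar>" for r s
    using K by (auto simp: G_def abs_mult intro!: mult_right_mono)
  have Gb2: "\<bar>G r s\<bar> \<le> indicator {0..t} r * (K * \<bar>P s\<bar>)" for r s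
  proof (cases "0 \<le> r \<and> r \<le> t")
    case True then show ?thesis using Gb[of r s] by simp
  next
    case False then show ?thesis by (auto simp: G_def)
  qed
  have iKP: "integrable lborel (\<lambda>s. K * \<bar>P s\<bar>)"
    using Pi by auto
  have Gr_int: "integrable lborel (\<lambda>s. G r s)" for r
    by (rule Bochner_Integration.integrable_bound[OF iKP]) (use Gb K in \<open>auto\<close>)
  have Gint: "integrable (lborel \<Otimes>\<^sub>M lborel) (\<lambda>(r, s). G r s)"
  proof (rule lborel_pair.Fubini_integrable)
    show "(\<lambda>(r, s). G r s) \<in> borel_measurable (lborel \<Otimes>\<^sub>M lborel)" by (rule Gm)
    show "AE x in lborel. integrable lborel (\<lambda>y. case (x, y) of (r, s) \<Rightarrow> G r s)"
      using Gr_int by simp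
    have cint: "integrable lborel (\<lambda>r. (K * (\<integral>s. \<bar>P s\<bar> \<partial>lborel)) * indicator {0..t} r)"
      by (rule borel_integrable_atLeastAtMost) simp
    show "integrable lborel (\<lambda>x. \<integral>y. norm (case (x, y) of (r, s) \<Rightarrow> G r s) \<partial>lborel)"
    proof (rule Bochner_Integration.integrable_bound[OF cint])
      show "(\<lambda>x. \<integral>y. norm (case (x, y) of (r, s) \<Rightarrow> G r s) \<partial>lborel) \<in> borel_measurable lborel"
        by measurable
      show "AE x in lborel. norm (\<integral>y. norm (case (x, y) of (r, s) \<Rightarrow> G r s) \<partial>lborel)
              \<le> norm ((K * (\<integral>s. \<bar>P s\<bar> \<partial>lborel)) * indicator {0..t} x)"
      proof (rule AE_I2)
        fix r
        have "(\<integral>s. \<bar>G r s\<bar> \<partial>lborel) \<le> (\<integral>s. indicator {0..t} r * (K * \<bar>P s\<bar>) \<partial>lborel)"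
          by (rule integral_mono) (use Gr_int iKP Gb2 in auto)
        also have "\<dots> = (K * (\<integral>s. \<bar>P s\<bar> \<partial>lborel)) * indicator {0..t} r"
          by (simp add: mult_ac)
        finally have "(\<integral>s. \<bar>G r s\<bar> \<partial>lborel) \<le> (K * (\<integral>s. \<bar>P s\<bar> \<partial>lborel)) * indicator {0..t} r" .
        moreover have "0 \<le> (\<integral>s. \<bar>G r s\<bar> \<partial>lborel)" by simp
        ultimately show "norm (\<integral>y. norm (case (r, y) of (r, s) \<Rightarrow> G r s) \<partial>lborel)
              \<le> norm ((K * (\<integral>s. \<bar>P s\<bar> \<partial>lborel)) * indicator {0..t} r)"
          by simp
      qed
    qed
  qed
  have e1: "(\<integral>s. G r s \<partial>lborel) = indicator {0..t} r * k r * (\<integral>s. indicator {0..r} s * P s \<partial>lborel)" for r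
  proof (cases "0 \<le> r \<and> r \<le> t")
    case True
    then have "G r s = k r * (indicator {0..r} s * P s)" for s
      by (auto simp: G_def split: split_indicator)
    then show ?thesis using True by simp
  next
    case False
    then have "G r s = 0" for s by (auto simp: G_def)
    then show ?thesis using False by simp
  qed
  have e2: "(\<integral>r. G r s \<partial>lborel) = P s * (\<integral>r. indicator {s..t} r * k r \<partial>lborel)" for s
  proof (cases "P s = 0")
    case True
    then have "G r s = 0" for r by (auto simp: G_def)
    then show ?thesis using True by simp
  next
    case False
    then have s: "0 \<le> s" "s \<le> t" using P0 by auto
    then have "G r s = P s * (indicator {s..t} r * k r)" for r
      by (auto simp: G_def split: split_indicator)
    then show ?thesis by simp
  qed
  have i1: "integrable lborel (\<lambda>r. \<integral>s. G r s \<partial>lborel)"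
    using lborel_pair.integrable_fst[OF Gint] by simp
  then show "integrable lborel (\<lambda>r. indicator {0..t} r * k r * (\<integral>s. indicator {0..r} s * P s \<partial>lborel))"
    by (simp only: e1)
  have i2: "integrable lborel (\<lambda>s. \<integral>r. G r s \<partial>lborel)"
    using lborel_pair.integrable_snd[OF Gint] by simp
  then show "integrable lborel (\<lambda>s. P s * (\<integral>r. indicator {s..t} r * k r \<partial>lborel))"
    by (simp only: e2)
  have "(\<integral>s. (\<integral>r. G r s \<partial>lborel) \<partial>lborel) = (\<integral>r. (\<integral>s. G r s \<partial>lborel) \<partial>lborel)"
    by (rule lborel_pair.Fubini_integral) (use Gint in simp)
  then show "(\<integral>r. indicator {0..t} r * k r * (\<integral>s. indicator {0..r} s * P s \<partial>lborel) \<partial>lborel)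
         = (\<integral>s. P s * (\<integral>r. indicator {s..t} r * k r \<partial>lborel) \<partial>lborel)"
    by (simp only: e1 e2)
qed

lemma lborel_integral_eq_HK:
  fixes f :: "real \<Rightarrow> real"
  assumes "integrable lborel f"
  shows "integral UNIV f = (\<integral>x. f x \<partial>lborel)"
  using has_integral_integral_lborel[OF assms] by (rule integral_unique)

lemma fubini_tri:
  fixes k \<phi> :: "real \<Rightarrow> real"
  assumes t: "0 \<le> t" and k: "continuous_on UNIV k"
    and \<phi>m: "(\<lambda>s. indicator {0..t} s * \<phi> s) \<in> borel_measurable lborel"
    and \<phi>i: "\<phi> absolutely_integrable_on {0..t}"
  shows "integral {0..t} (\<lambda>r. k r * integral {0..r} \<phi>) = integral {0..t} (\<lambda>s. integral {s..t} k * \<phi> s)"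
proof -
  define P where "P = (\<lambda>s. indicator {0..t} s * \<phi> s)"
  have Pm: "P \<in> borel_measurable lborel" using \<phi>m by (simp add: P_def)
  have "integrable lebesgue P"
    using \<phi>i by (simp add: set_integrable_def P_def)
  then have Pi: "integrable lborel P"
    using integrable_completion[of P lborel] Pm by simp
  have P0: "\<And>s. s \<notin> {0..t} \<Longrightarrow> P s = 0" by (simp add: P_def)
  note F = fubini_tri_L[OF t k Pm Pi P0]
  have inner1: "(\<integral>s. indicator {0..r} s * P s \<partial>lborel) = integral {0..r} \<phi>" if r: "r \<in> {0..t}" for r
  proof -
    have eq: "(\<lambda>s. indicator {0..r} s * P s) = (\<lambda>s. if s \<in> {0..r} then \<phi> s else 0)"
      using r by (auto simp: P_def split: split_indicator)
    have "integrable lborel (\<lambda>s. indicator {0..r} s * P s)"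
      using integrable_mult_indicator[OF _ Pi, of "{0..r}"] by simp
    then have "(\<integral>s. indicator {0..r} s * P s \<partial>lborel) = integral UNIV (\<lambda>s. indicator {0..r} s * P s)"
      by (simp add: lborel_integral_eq_HK)
    also have "\<dots> = integral {0..r} \<phi>"
      unfolding eq by (rule Henstock_Kurzweil_Integration.integral_restrict_UNIV)
    finally show ?thesis .
  qed
  have inner2: "(\<integral>r. indicator {s..t} r * k r \<partial>lborel) = integral {s..t} k" for s
  proof -
    have ci: "integrable lborel (\<lambda>r. k r * indicator {s..t} r)"
      by (rule borel_integrable_atLeastAtMost) (use k in \<open>simp add: continuous_on_eq_continuous_at\<close>)
    have eq: "(\<lambda>r. indicator {s..t} r * k r) = (\<lambda>r. if r \<in> {s..t} then k r else 0)"
      by (auto split: split_indicator)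
    have "(\<integral>r. indicator {s..t} r * k r \<partial>lborel) = integral UNIV (\<lambda>r. indicator {s..t} r * k r)"
      using ci by (simp add: lborel_integral_eq_HK mult.commute)
    also have "\<dots> = integral {s..t} k"
      unfolding eq by (rule Henstock_Kurzweil_Integration.integral_restrict_UNIV)
    finally show ?thesis .
  qed
  have L: "(\<lambda>r. indicator {0..t} r * k r * (\<integral>s. indicator {0..r} s * P s \<partial>lborel))
        = (\<lambda>r. if r \<in> {0..t} then k r * integral {0..r} \<phi> else 0)"
    by (auto simp: inner1)
  have R: "(\<lambda>s. P s * (\<integral>r. indicator {s..t} r * k r \<partial>lborel))
        = (\<lambda>s. if s \<in> {0..t} then integral {s..t} k * \<phi> s else 0)"
    by (auto simp: inner2 P_def)
  have "integral {0..t} (\<lambda>r. k r * integral {0..r} \<phi>)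
      = integral UNIV (\<lambda>r. if r \<in> {0..t} then k r * integral {0..r} \<phi> else 0)"
    by (rule Henstock_Kurzweil_Integration.integral_restrict_UNIV[symmetric])
  also have "\<dots> = (\<integral>r. indicator {0..t} r * k r * (\<integral>s. indicator {0..r} s * P s \<partial>lborel) \<partial>lborel)"
    unfolding L[symmetric] by (rule lborel_integral_eq_HK[OF F(1)])
  also have "\<dots> = (\<integral>s. P s * (\<integral>r. indicator {s..t} r * k r \<partial>lborel) \<partial>lborel)"
    by (rule F(3))
  also have "\<dots> = integral UNIV (\<lambda>s. if s \<in> {0..t} then integral {s..t} k * \<phi> s else 0)"
    unfolding R[symmetric] by (rule lborel_integral_eq_HK[OF F(2), symmetric])
  also have "\<dots> = integral {0..t} (\<lambda>s. integral {s..t} k * \<phi> s)"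
    by (rule Henstock_Kurzweil_Integration.integral_restrict_UNIV)
  finally show ?thesis .
qed

lemma abs_int_comp:
  fixes f :: "real \<Rightarrow> real^'n"
  shows "f absolutely_integrable_on S \<Longrightarrow> (\<lambda>x. f x $ i) absolutely_integrable_on S"
  using absolutely_integrable_component[where f=f and A=S and b="axis i 1"] by (simp add: cart_eq_inner_axis)

lemma mat_exp_shift_cont: "continuous_on S (\<lambda>r. mat_exp ((t - r) *\<^sub>R A) $ i $ j)"
  by (rule continuous_on_compose2[OF mat_exp_cont[of UNIV] continuous_on_diff]) (auto intro: continuous_intros)

lemma mat_exp_shift_A_cont: "continuous_on S (\<lambda>r. (mat_exp ((t - r) *\<^sub>R A) ** A) $ i $ j)"
  unfolding matrix_matrix_mult_def vec_lambda_beta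
  by (intro continuous_on_sum continuous_on_mult mat_exp_shift_cont continuous_on_const)

lemma mat_exp_shift_deriv:
  "((\<lambda>r. - (mat_exp ((t - r) *\<^sub>R A) $ i $ j)) has_real_derivative (mat_exp ((t - r) *\<^sub>R A) ** A) $ i $ j) (at r)"
proof -
  have "((\<lambda>r. t - r) has_real_derivative -1) (at r)"
    by (auto intro!: derivative_eq_intros)
  from DERIV_chain2[OF mat_exp_deriv this]
  have "((\<lambda>r. mat_exp ((t - r) *\<^sub>R A) $ i $ j) has_real_derivative (mat_exp ((t - r) *\<^sub>R A) ** A) $ i $ j * -1) (at r)" .
  from DERIV_minus[OF this] show ?thesis by simp
qed

lemma ftc_exp:
  assumes "s \<le> t"
  shows "((\<lambda>r. (mat_exp ((t - r) *\<^sub>R A) ** A) $ i $ j) has_integral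
          (mat_exp ((t - s) *\<^sub>R A) $ i $ j - mat 1 $ i $ j)) {s..t}"
proof -
  have "((\<lambda>r. (mat_exp ((t - r) *\<^sub>R A) ** A) $ i $ j) has_integral
          ((- (mat_exp ((t - t) *\<^sub>R A) $ i $ j)) - (- (mat_exp ((t - s) *\<^sub>R A) $ i $ j)))) {s..t}"
    by (rule fundamental_theorem_of_calculus[OF assms])
       (auto simp: has_real_derivative_iff_has_vector_derivative[symmetric]
             intro: has_field_derivative_at_within mat_exp_shift_deriv)
  then show ?thesis using mat_exp_zero[of A] by simp
qed

lemma voc:
  fixes A :: "real^'N^'N" and f x :: "real \<Rightarrow> real^'N"
  assumes t: "0 \<le> t" and fi: "f absolutely_integrable_on {0..t}"
    and fm: "\<And>b. (\<lambda>s. indicator {0..t} s * (f s $ b)) \<in> borel_measurable lborel"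
    and x: "\<And>r. r \<in> {0..t} \<Longrightarrow> x r = integral {0..r} f"
  shows "((\<lambda>s. (mat_exp ((t - s) *\<^sub>R A) *v (f s - A *v x s)) $ a) has_integral x t $ a) {0..t}"
proof -
  let ?E = "\<lambda>s. mat_exp ((t - s) *\<^sub>R A)"
  have fbi: "(\<lambda>s. f s $ b) absolutely_integrable_on {0..t}" for b
    by (rule abs_int_comp[OF fi])
  have fint: "f integrable_on {0..r}" if "r \<in> {0..t}" for r
    using that set_lebesgue_integral_eq_integral(1)[OF absolutely_integrable_on_subinterval[OF fi]] by auto
  have xb: "x r $ b = integral {0..r} (\<lambda>s. f s $ b)" if "r \<in> {0..t}" for r b
    using x[OF that] integral_component_eq_cart[OF fint[OF that]] by simp
  have xb_cont: "continuous_on {0..t} (\<lambda>r. x r $ b)" for b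
  proof -
    have "continuous_on {0..t} (\<lambda>r. integral {0..r} (\<lambda>s. f s $ b))"
      by (rule indefinite_integral_continuous_1) (use fbi set_lebesgue_integral_eq_integral(1) in blast)
    then show ?thesis by (rule continuous_on_eq) (simp add: xb)
  qed
  have coef_int: "(\<lambda>s. c s * f s $ b) absolutely_integrable_on {0..t}" if c: "continuous_on {0..t} c" for c b
  proof (rule absolutely_integrable_bounded_measurable_product_real)
    show "c \<in> borel_measurable (lebesgue_on {0..t})"
      by (rule continuous_imp_measurable_on_sets_lebesgue[OF c]) simp
    show "bounded (c ` {0..t})"
      by (intro compact_imp_bounded compact_continuous_image c) simp
  qed (auto intro: fbi)
  define J where "J b = integral {0..t} (\<lambda>r. (?E r ** A) $ a $ b * x r $ b)" for b
  have H1: "((\<lambda>r. (?E r ** A) $ a $ b * x r $ b) has_integral J b) {0..t}" for b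
    unfolding J_def
    by (intro integrable_integral integrable_continuous_interval continuous_on_mult mat_exp_shift_A_cont xb_cont)
  have H2: "((\<lambda>s. (?E s $ a $ b - mat 1 $ a $ b) * f s $ b) has_integral J b) {0..t}" for b
  proof -
    have int2: "(\<lambda>s. (?E s $ a $ b - mat 1 $ a $ b) * f s $ b) integrable_on {0..t}"
    proof -
      have c: "continuous_on {0..t} (\<lambda>s. ?E s $ a $ b - mat 1 $ a $ b)"
        by (intro continuous_on_diff mat_exp_shift_cont continuous_on_const)
      show ?thesis by (rule set_lebesgue_integral_eq_integral(1)[OF coef_int[OF c]])
    qed
    have kc: "continuous_on UNIV (\<lambda>r. (?E r ** A) $ a $ b)" by (rule mat_exp_shift_A_cont)
    have F: "integral {0..t} (\<lambda>r. (?E r ** A) $ a $ b * integral {0..r} (\<lambda>s. f s $ b))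
           = integral {0..t} (\<lambda>s. integral {s..t} (\<lambda>r. (?E r ** A) $ a $ b) * f s $ b)"
      by (rule fubini_tri[OF t kc fm fbi])
    have "J b = integral {0..t} (\<lambda>r. (?E r ** A) $ a $ b * integral {0..r} (\<lambda>s. f s $ b))"
      unfolding J_def by (rule integral_cong) (simp add: xb)
    also have "\<dots> = integral {0..t} (\<lambda>s. integral {s..t} (\<lambda>r. (?E r ** A) $ a $ b) * f s $ b)"
      by (rule F)
    also have "\<dots> = integral {0..t} (\<lambda>s. (?E s $ a $ b - mat 1 $ a $ b) * f s $ b)"
      by (rule integral_cong) (simp add: integral_unique[OF ftc_exp])
    finally show ?thesis using int2 by (simp add: integrable_integral)
  qed
  have S1: "((\<lambda>r. \<Sum>b\<in>UNIV. (?E r ** A) $ a $ b * x r $ b) has_integral (\<Sum>b\<in>UNIV. J b)) {0..t}"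
    by (rule has_integral_sum) (auto intro: H1)
  have S2: "((\<lambda>s. \<Sum>b\<in>UNIV. (?E s $ a $ b - mat 1 $ a $ b) * f s $ b) has_integral (\<Sum>b\<in>UNIV. J b)) {0..t}"
    by (rule has_integral_sum) (auto intro: H2)
  have e1: "(\<Sum>b\<in>UNIV. (?E r ** A) $ a $ b * x r $ b) = (?E r *v (A *v x r)) $ a" for r
    by (simp only: matrix_vector_mul_assoc) (simp only: matrix_vector_mult_def vec_lambda_beta)
  have e2: "(\<Sum>b\<in>UNIV. (?E s $ a $ b - mat 1 $ a $ b) * f s $ b) = (?E s *v f s) $ a - f s $ a" for s
  proof -
    have "(\<Sum>b\<in>UNIV. (?E s $ a $ b - mat 1 $ a $ b) * f s $ b) = ((?E s - mat 1) *v f s) $ a"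
      by (simp only: matrix_vector_mult_def vec_lambda_beta vector_minus_component)
    also have "\<dots> = (?E s *v f s) $ a - f s $ a"
      by (simp only: matrix_vector_mult_diff_rdistrib matrix_vector_mul_lid vector_minus_component)
    finally show ?thesis .
  qed
  have S1': "((\<lambda>r. (?E r *v (A *v x r)) $ a) has_integral (\<Sum>b\<in>UNIV. J b)) {0..t}"
    using S1 by (simp only: e1)
  have S2': "((\<lambda>s. (?E s *v f s) $ a - f s $ a) has_integral (\<Sum>b\<in>UNIV. J b)) {0..t}"
    using S2 by (simp only: e2)
  have fa: "((\<lambda>s. f s $ a) has_integral x t $ a) {0..t}"
    using xb[of t a] t fbi set_lebesgue_integral_eq_integral(1) by (auto intro: integrable_integral)
  have S3: "((\<lambda>s. (?E s *v f s) $ a) has_integral (\<Sum>b\<in>UNIV. J b) + x t $ a) {0..t}"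
    using has_integral_add[OF S2' fa] by simp
  have "((\<lambda>s. (?E s *v f s) $ a - (?E s *v (A *v x s)) $ a) has_integral x t $ a) {0..t}"
    using has_integral_diff[OF S3 S1'] by simp
  then show ?thesis
    by (simp only: matrix_vector_mult_diff_distrib vector_minus_component)
qed

lemma sin_lip: "\<bar>sin (a::real) - sin b\<bar> \<le> \<bar>a - b\<bar>"
proof -
  have "\<bar>sin a - sin b\<bar> = 2 * \<bar>sin ((a - b) / 2)\<bar> * \<bar>cos ((a + b) / 2)\<bar>"
    by (simp add: sin_diff_sin abs_mult)
  also have "\<dots> \<le> 2 * \<bar>(a - b) / 2\<bar> * 1"
    by (intro mult_mono abs_sin_x_le_abs_x abs_cos_le_one) auto
  finally show ?thesis by simp
qed

lemma psi_ratio_bdd: "\<bar>(sin ((p::real) + s) - sin p) / s - cos p\<bar> \<le> 2"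
proof (cases "s = 0")
  case True
  then have "\<bar>(sin (p + s) - sin p) / s - cos p\<bar> = \<bar>cos p\<bar>" by simp
  then show ?thesis using abs_cos_le_one[of p] by linarith
next
  case False
  have "\<bar>(sin (p + s) - sin p) / s\<bar> \<le> 1"
    using sin_lip[of "p + s" p] False by (simp add: abs_divide divide_le_eq_1)
  then show ?thesis using abs_cos_le_one[of p] by linarith
qed

lemma psi_bound:
  fixes p zb z :: real
  assumes zb: "0 < zb" and z: "\<bar>z\<bar> \<le> zb"
  defines "G \<equiv> Sup {\<bar>(sin (p + s) - sin p) / s - cos p\<bar> | s. 0 < \<bar>s\<bar> \<and> \<bar>s\<bar> \<le> zb}"
  shows "\<bar>sin (p + z) - sin p - cos p * z\<bar> \<le> G * \<bar>z\<bar>" and "0 \<le> G"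
proof -
  let ?S = "{\<bar>(sin (p + s) - sin p) / s - cos p\<bar> | s. 0 < \<bar>s\<bar> \<and> \<bar>s\<bar> \<le> zb}"
  have bdd: "bdd_above ?S" using psi_ratio_bdd by (auto intro!: bdd_aboveI[of _ 2])
  have mem: "\<bar>(sin (p + zb) - sin p) / zb - cos p\<bar> \<in> ?S" using zb by auto
  show "0 \<le> G" unfolding G_def
    by (rule order_trans[OF abs_ge_zero cSup_upper[OF mem bdd]])
  show "\<bar>sin (p + z) - sin p - cos p * z\<bar> \<le> G * \<bar>z\<bar>"
  proof (cases "z = 0")
    case True then show ?thesis by simp
  next
    case False
    have m: "\<bar>(sin (p + z) - sin p) / z - cos p\<bar> \<in> ?S" using False z by auto
    have "\<bar>sin (p + z) - sin p - cos p * z\<bar> = \<bar>(sin (p + z) - sin p) / z - cos p\<bar> * \<bar>z\<bar>"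
      using False by (simp add: abs_mult[symmetric] field_simps)
    also have "\<dots> \<le> G * \<bar>z\<bar>" unfolding G_def
      by (intro mult_right_mono cSup_upper[OF m bdd]) simp
    finally show ?thesis .
  qed
qed

lemma impulse_entry: "impulse C A B t $ i $ q = (\<Sum>p\<in>UNIV. \<Sum>r\<in>UNIV. C $ i $ p * mat_exp (t *\<^sub>R A) $ p $ r * B $ r $ q)"
  by (simp add: impulse_def matrix_matrix_mult_def sum_distrib_left sum_distrib_right mult.assoc)
     (rule sum.swap)

lemma impulse_cont: "continuous_on S (\<lambda>t. impulse C A B t $ i $ q)"
  unfolding impulse_entry
  by (intro continuous_on_sum continuous_on_mult continuous_on_const mat_exp_cont)

lemma conv_bound:
  fixes h w :: "real \<Rightarrow> real"
  assumes t: "0 \<le> t" and h: "continuous_on UNIV h" and hint: "h absolutely_integrable_on {0..}"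
    and wm: "w \<in> borel_measurable (lebesgue_on {0..t})" and wb: "\<And>s. s \<in> {0..t} \<Longrightarrow> \<bar>w s\<bar> \<le> c"
  shows "(\<lambda>s. h (t - s) * w s) absolutely_integrable_on {0..t}"
    and "\<bar>integral {0..t} (\<lambda>s. h (t - s) * w s)\<bar> \<le> c * integral {0..} (\<lambda>\<tau>. \<bar>h \<tau>\<bar>)"
proof -
  have c0: "0 \<le> c" using wb[of 0] t by auto
  have hc: "continuous_on {0..t} (\<lambda>s. h (t - s))"
    by (rule continuous_on_compose2[OF h]) (auto intro: continuous_intros)
  have "(\<lambda>s. w s * h (t - s)) absolutely_integrable_on {0..t}"
  proof (rule absolutely_integrable_bounded_measurable_product_real[OF wm])
    show "bounded (w ` {0..t})" using wb unfolding bounded_iff by (intro exI[of _ c]) auto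
    show "(\<lambda>s. h (t - s)) absolutely_integrable_on {0..t}"
      by (rule absolutely_integrable_continuous_real[OF hc])
  qed simp
  then show ai: "(\<lambda>s. h (t - s) * w s) absolutely_integrable_on {0..t}"
    by (simp add: mult.commute)
  have "(\<lambda>\<tau>. norm (h \<tau>)) integrable_on {0..}"
    using hint absolutely_integrable_on_def by blast
  then have hai: "(\<lambda>\<tau>. \<bar>h \<tau>\<bar>) integrable_on {0..}" by simp
  have hac: "continuous_on {0..t} (\<lambda>s. c * \<bar>h (t - s)\<bar>)"
    by (intro continuous_on_mult continuous_on_const continuous_on_rabs hc)
  have "\<bar>integral {0..t} (\<lambda>s. h (t - s) * w s)\<bar> \<le> integral {0..t} (\<lambda>s. c * \<bar>h (t - s)\<bar>)"
  proof -
    have "norm (integral {0..t} (\<lambda>s. h (t - s) * w s)) \<le> integral {0..t} (\<lambda>s. c * \<bar>h (t - s)\<bar>)"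
    proof (rule integral_norm_bound_integral)
      show "(\<lambda>s. h (t - s) * w s) integrable_on {0..t}"
        using ai set_lebesgue_integral_eq_integral(1) by blast
      show "(\<lambda>s. c * \<bar>h (t - s)\<bar>) integrable_on {0..t}"
        by (rule integrable_continuous_interval[OF hac])
      fix s assume "s \<in> {0..t}"
      then show "norm (h (t - s) * w s) \<le> c * \<bar>h (t - s)\<bar>"
      proof -
        have "\<bar>w s\<bar> * \<bar>h (t - s)\<bar> \<le> c * \<bar>h (t - s)\<bar>"
          using wb[of s] \<open>s \<in> {0..t}\<close> by (intro mult_right_mono) auto
        then show ?thesis by (simp add: abs_mult mult.commute)
      qed
    qed
    then show ?thesis by simp
  qed
  also have "integral {0..t} (\<lambda>s. c * \<bar>h (t - s)\<bar>) = c * integral {0..t} (\<lambda>s. \<bar>h (t - s)\<bar>)"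
    by simp
  also have "integral {0..t} (\<lambda>s. \<bar>h (t - s)\<bar>) = integral {0..t} (\<lambda>r. \<bar>h r\<bar>)"
  proof -
    have "integral {0..t} (\<lambda>s. \<bar>h (t - s)\<bar>) = integral {- 0..- (- t)} (\<lambda>s. (\<lambda>y. \<bar>h (t + y)\<bar>) (- s))"
      by simp
    also have "\<dots> = integral {-t..0} (\<lambda>y. \<bar>h (t + y)\<bar>)"
      using Henstock_Kurzweil_Integration.integral_reflect_real[where a="-t" and b=0 and f="\<lambda>y. \<bar>h (t + y)\<bar>"] by (simp only: minus_minus minus_zero diff_conv_add_uminus)
    also have "\<dots> = integral {0 - t..t - t} (\<lambda>y. \<bar>h (y + t)\<bar>)"
      by (simp add: add.commute)
    also have "\<dots> = integral {0..t} (\<lambda>r. \<bar>h r\<bar>)"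
      by (rule integral_shift_real_ivl)
    finally show ?thesis .
  qed
  also have "integral {0..t} (\<lambda>r. \<bar>h r\<bar>) \<le> integral {0..} (\<lambda>r. \<bar>h r\<bar>)"
  proof (rule integral_subset_le)
    show "{0..t} \<subseteq> {0..}" by auto
    show "(\<lambda>r. \<bar>h r\<bar>) integrable_on {0..t}"
      by (intro integrable_continuous_interval continuous_on_rabs continuous_on_subset[OF h]) auto
  qed (use hai in auto)
  finally show "\<bar>integral {0..t} (\<lambda>s. h (t - s) * w s)\<bar> \<le> c * integral {0..} (\<lambda>\<tau>. \<bar>h \<tau>\<bar>)"
    using c0 by (simp add: mult_left_mono)
qed

lemma output_repr:
  fixes C :: "real^'N^'m" and A :: "real^'N^'N" and B1 :: "real^'n^'N" and B2 :: "real^'l^'N"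
    and w1 :: "real \<Rightarrow> real^'n" and w2 :: "real \<Rightarrow> real^'l" and x :: "real \<Rightarrow> real^'N"
  assumes rep: "\<And>a. ((\<lambda>s. (mat_exp ((t - s) *\<^sub>R A) *v (B1 *v w1 s + B2 *v w2 s)) $ a) has_integral x t $ a) {0..t}"
  shows "((\<lambda>s. (impulse C A B1 (t - s) *v w1 s) $ i + (impulse C A B2 (t - s) *v w2 s) $ i) has_integral (C *v x t) $ i) {0..t}"
proof -
  let ?E = "\<lambda>s. mat_exp ((t - s) *\<^sub>R A)"
  have H: "((\<lambda>s. \<Sum>a\<in>UNIV. C $ i $ a * (?E s *v (B1 *v w1 s + B2 *v w2 s)) $ a) has_integral
        (\<Sum>a\<in>UNIV. C $ i $ a * x t $ a)) {0..t}"
    by (intro has_integral_sum has_integral_mult_right rep) auto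
  have e: "(\<Sum>a\<in>UNIV. C $ i $ a * (?E s *v (B1 *v w1 s + B2 *v w2 s)) $ a)
        = (impulse C A B1 (t - s) *v w1 s) $ i + (impulse C A B2 (t - s) *v w2 s) $ i" for s
  proof -
    have "(\<Sum>a\<in>UNIV. C $ i $ a * (?E s *v (B1 *v w1 s + B2 *v w2 s)) $ a)
        = (C *v (?E s *v (B1 *v w1 s + B2 *v w2 s))) $ i"
      by (simp only: matrix_vector_mult_def[of C] vec_lambda_beta)
    also have "C *v (?E s *v (B1 *v w1 s + B2 *v w2 s)) = impulse C A B1 (t - s) *v w1 s + impulse C A B2 (t - s) *v w2 s"
      by (simp only: impulse_def matrix_vector_mul_assoc matrix_vector_right_distrib matrix_mul_assoc)
    finally show ?thesis by simp
  qed
  have e2: "(\<Sum>a\<in>UNIV. C $ i $ a * x t $ a) = (C *v x t) $ i"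
    by (simp only: matrix_vector_mult_def vec_lambda_beta)
  show ?thesis using H unfolding e e2 .
qed

lemma out_bound:
  fixes C :: "real^'N^'m" and A :: "real^'N^'N" and B1 :: "real^'n^'N" and B2 :: "real^'l^'N"
    and w1 :: "real \<Rightarrow> real^'n" and w2 :: "real \<Rightarrow> real^'l"
  assumes t: "0 \<le> t"
    and h1: "\<And>p q. (\<lambda>\<tau>. impulse C A B1 \<tau> $ p $ q) absolutely_integrable_on {0..}"
    and h2: "\<And>p q. (\<lambda>\<tau>. impulse C A B2 \<tau> $ p $ q) absolutely_integrable_on {0..}"
    and w1m: "\<And>q. (\<lambda>s. w1 s $ q) \<in> borel_measurable (lebesgue_on {0..t})"
    and w2m: "\<And>q. (\<lambda>s. w2 s $ q) \<in> borel_measurable (lebesgue_on {0..t})"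
    and w1b: "\<And>s q. s \<in> {0..t} \<Longrightarrow> \<bar>w1 s $ q\<bar> \<le> b1 $ q"
    and w2b: "\<And>s q. s \<in> {0..t} \<Longrightarrow> \<bar>w2 s $ q\<bar> \<le> b2 $ q"
    and rep: "((\<lambda>s. (impulse C A B1 (t - s) *v w1 s) $ i + (impulse C A B2 (t - s) *v w2 s) $ i) has_integral y) {0..t}"
  shows "\<bar>y\<bar> \<le> (gain C A B1 *v b1 + gain C A B2 *v b2) $ i"
proof -
  let ?k1 = "\<lambda>q. integral {0..t} (\<lambda>s. impulse C A B1 (t - s) $ i $ q * w1 s $ q)"
  let ?k2 = "\<lambda>q. integral {0..t} (\<lambda>s. impulse C A B2 (t - s) $ i $ q * w2 s $ q)"
  note cb1 = conv_bound[OF t impulse_cont h1 w1m w1b]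
  note cb2 = conv_bound[OF t impulse_cont h2 w2m w2b]
  have I1: "((\<lambda>s. impulse C A B1 (t - s) $ i $ q * w1 s $ q) has_integral ?k1 q) {0..t}" for q
    using set_lebesgue_integral_eq_integral(1)[OF cb1(1)] by (rule integrable_integral)
  have I2: "((\<lambda>s. impulse C A B2 (t - s) $ i $ q * w2 s $ q) has_integral ?k2 q) {0..t}" for q
    using set_lebesgue_integral_eq_integral(1)[OF cb2(1)] by (rule integrable_integral)
  have S: "((\<lambda>s. (\<Sum>q\<in>UNIV. impulse C A B1 (t - s) $ i $ q * w1 s $ q) + (\<Sum>q\<in>UNIV. impulse C A B2 (t - s) $ i $ q * w2 s $ q))
        has_integral (\<Sum>q\<in>UNIV. ?k1 q) + (\<Sum>q\<in>UNIV. ?k2 q)) {0..t}"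
    by (intro has_integral_add has_integral_sum I1 I2) auto
  have "y = (\<Sum>q\<in>UNIV. ?k1 q) + (\<Sum>q\<in>UNIV. ?k2 q)"
    by (rule has_integral_unique[OF rep]) (use S in \<open>simp only: matrix_vector_mult_def vec_lambda_beta\<close>)
  then have "\<bar>y\<bar> \<le> (\<Sum>q\<in>UNIV. \<bar>?k1 q\<bar>) + (\<Sum>q\<in>UNIV. \<bar>?k2 q\<bar>)"
    using sum_abs[of ?k1 UNIV] sum_abs[of ?k2 UNIV] by linarith
  also have "\<dots> \<le> (\<Sum>q\<in>UNIV. gain C A B1 $ i $ q * b1 $ q) + (\<Sum>q\<in>UNIV. gain C A B2 $ i $ q * b2 $ q)"
    by (intro add_mono sum_mono) (use cb1(2) cb2(2) in \<open>simp_all add: gain_def mult.commute\<close>)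
  also have "\<dots> = (gain C A B1 *v b1 + gain C A B2 *v b2) $ i"
    by (simp only: vector_add_component matrix_vector_mult_def vec_lambda_beta)
  finally show ?thesis .
qed

lemma comp_cont:
  fixes x :: "real \<Rightarrow> real^'N" and C :: "real^'N^'m"
  shows "continuous_on S x \<Longrightarrow> continuous_on S (\<lambda>s. (C *v x s) $ i)"
  by (intro linear_continuous_on_compose[OF continuous_on_compose2[OF matrix_vector_mult_linear_continuous_on]]
      bounded_linear.linear[OF bounded_linear_vec_nth]) auto

lemma linf_leI:
  assumes "\<And>t i. 0 \<le> t \<Longrightarrow> \<bar>w t $ i\<bar> \<le> b $ i"
  shows "linf_le w b"
  unfolding linf_le_def linf_def using assms by (auto intro!: SUP_least)

lemma linf_leD:
  assumes "linf_le w b" "0 \<le> t"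
  shows "\<bar>w t $ i\<bar> \<le> b $ i"
proof -
  have "ereal \<bar>w t $ i\<bar> \<le> (SUP t\<in>{0..}. ereal \<bar>w t $ i\<bar>)"
    using assms(2) by (intro SUP_upper) auto
  also have "\<dots> \<le> ereal (b $ i)" using assms(1) by (simp add: linf_le_def linf_def)
  finally show ?thesis by simp
qed

lemma vec_nth_meas:
  fixes g :: "real \<Rightarrow> real^'n"
  shows "g \<in> borel_measurable M \<Longrightarrow> (\<lambda>s. g s $ q) \<in> borel_measurable M"
  by (rule measurable_compose[OF _ borel_measurable_continuous_onI[OF linear_continuous_on[OF bounded_linear_vec_nth]]])

theorem theorem3:
  fixes A :: "real^'N^'N" and Bu :: "real^'n^'N" and Bv :: "real^'l^'N"
    and Cy :: "real^'N^'m" and Cz :: "real^'N^'l" and phis :: "real^'l"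
    and ybar :: "real^'m" and ubar :: "real^'n" and zbar :: "real^'l"
  assumes int_yu: "\<And>p q. (\<lambda>t. impulse Cy A Bu t $ p $ q) absolutely_integrable_on {0..}"
    and int_yv: "\<And>p q. (\<lambda>t. impulse Cy A Bv t $ p $ q) absolutely_integrable_on {0..}"
    and int_zu: "\<And>p q. (\<lambda>t. impulse Cz A Bu t $ p $ q) absolutely_integrable_on {0..}"
    and int_zv: "\<And>p q. (\<lambda>t. impulse Cz A Bv t $ p $ q) absolutely_integrable_on {0..}"
    and ubar_nonneg: "\<forall>i. 0 \<le> ubar $ i"
    and zbar_pos: "\<forall>i. 0 < zbar $ i"
    and cond1: "\<forall>i. (gain Cz A Bu *v ubar) $ i
                  < ((mat 1 - gain Cz A Bv ** gamma_psi phis zbar) *v zbar) $ i"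
    and cond2: "\<forall>i. (gain Cy A Bu *v ubar + gain Cy A Bv *v (gamma_psi phis zbar *v zbar)) $ i
                  \<le> ybar $ i"
  shows "\<forall>u x. u \<in> borel_measurable (restrict_space lborel {0..}) \<longrightarrow> linf_le u ubar \<longrightarrow>
           lure_solution A Bu Bv Cz phis u x \<longrightarrow>
           linf_le (\<lambda>t. Cz *v x t) zbar \<and> linf_le (\<lambda>t. Cy *v x t) ybar"
proof (intro allI impI conjI)
  fix u :: "real \<Rightarrow> real^'n" and x :: "real \<Rightarrow> real^'N"
  assume um: "u \<in> borel_measurable (restrict_space lborel {0..})"
    and ul: "linf_le u ubar" and sol: "lure_solution A Bu Bv Cz phis u x"
  define f where "f s = A *v x s + Bv *v psi phis (Cz *v x s) + Bu *v u s" for s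
  define v where "v s = psi phis (Cz *v x s)" for s
  define G where "G = gamma_psi phis zbar"
  have x0: "x 0 = 0" using sol by (simp add: lure_solution_def)
  have fint: "f absolutely_integrable_on {0..t}" if "0 \<le> t" for t
    using sol that unfolding lure_solution_def f_def by blast
  have fhas: "(f has_integral x t) {0..t}" if "0 \<le> t" for t
    using sol that unfolding lure_solution_def f_def by blast
  have xint: "x r = integral {0..r} f" if "0 \<le> r" for r
    using fhas[OF that] by (rule integral_unique[symmetric])
  have ub: "\<bar>u s $ q\<bar> \<le> ubar $ q" if "0 \<le> s" for s q
    by (rule linf_leD[OF ul that])
  have xcont: "continuous_on {0..T} x" if "0 \<le> T" for T
  proof -
    have "continuous_on {0..T} (\<lambda>r. integral {0..r} f)"
      by (rule indefinite_integral_continuous_1) (use fint[OF that] set_lebesgue_integral_eq_integral(1) in blast)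
    then show ?thesis by (rule continuous_on_eq) (simp add: xint)
  qed
  have vcont: "continuous_on {0..T} (\<lambda>s. v s $ q)" if "0 \<le> T" for T q
  proof -
    have zc: "continuous_on {0..T} (\<lambda>s. (Cz *v x s) $ q)" by (rule comp_cont[OF xcont[OF that]])
    show ?thesis unfolding v_def psi_def vec_lambda_beta
      by (intro continuous_intros zc)
  qed
  have umi: "(\<lambda>s. indicator {0..} s *\<^sub>R u s) \<in> borel_measurable lborel"
    using um by (subst (asm) borel_measurable_restrict_space_iff) auto
  have umq: "(\<lambda>s. (indicator {0..} s *\<^sub>R u s) $ q) \<in> borel_measurable lborel" for q
    by (rule vec_nth_meas[OF umi])
  have uleb: "(\<lambda>s. u s $ q) \<in> borel_measurable (lebesgue_on {0..t})" if "0 \<le> t" for t q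
  proof -
    have "(\<lambda>s. (indicator {0..} s *\<^sub>R u s) $ q) \<in> borel_measurable (lebesgue_on {0..t})"
      by (intro measurable_restrict_space1 measurable_completion umq)
    then show ?thesis
      by (rule measurable_cong[THEN iffD1, rotated]) (auto simp: indicator_def)
  qed
  have vleb: "(\<lambda>s. v s $ q) \<in> borel_measurable (lebesgue_on {0..t})" if "0 \<le> t" for t q
    by (rule continuous_imp_measurable_on_sets_lebesgue[OF vcont[OF that]]) simp
  have fm: "(\<lambda>s. indicator {0..t} s * (f s $ b)) \<in> borel_measurable lborel" if t: "0 \<le> t" for t b
  proof -
    have cc: "continuous_on {0..t} (\<lambda>s. (A *v x s) $ b + (Bv *v v s) $ b)"
    proof (intro continuous_on_add comp_cont[OF xcont[OF t]])
      show "continuous_on {0..t} (\<lambda>s. (Bv *v v s) $ b)"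
        unfolding matrix_vector_mult_def vec_lambda_beta
        by (intro continuous_on_sum continuous_on_mult continuous_on_const vcont[OF t])
    qed
    have m1: "(\<lambda>s. indicator {0..t} s *\<^sub>R ((A *v x s) $ b + (Bv *v v s) $ b)) \<in> borel_measurable lborel"
      using borel_measurable_continuous_on_indicator[OF _ cc] by (simp add: measurable_lborel2)
    have m2: "(\<lambda>s. \<Sum>q\<in>UNIV. Bu $ b $ q * (indicator {0..t} s * (indicator {0..} s *\<^sub>R u s) $ q)) \<in> borel_measurable lborel"
      using umq by measurable
    have eq: "indicator {0..t} s * (f s $ b) = indicator {0..t} s *\<^sub>R ((A *v x s) $ b + (Bv *v v s) $ b)
         + (\<Sum>q\<in>UNIV. Bu $ b $ q * (indicator {0..t} s * (indicator {0..} s *\<^sub>R u s) $ q))" for s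
    proof -
      have fb: "f s $ b = ((A *v x s) $ b + (Bv *v v s) $ b) + (\<Sum>q\<in>UNIV. Bu $ b $ q * u s $ q)"
        by (simp only: f_def v_def vector_add_component matrix_vector_mult_def[of Bu] vec_lambda_beta)
      show ?thesis
      proof (cases "s \<in> {0..t}")
        case True
        then have "s \<in> {0..}" by simp
        with True show ?thesis by (simp add: fb)
      next
        case False
        then show ?thesis by (simp add: fb)
      qed
    qed
    show ?thesis unfolding eq using m1 m2 by measurable
  qed
  have repx: "((\<lambda>s. (mat_exp ((t - s) *\<^sub>R A) *v (Bu *v u s + Bv *v v s)) $ a) has_integral x t $ a) {0..t}"
    if t: "0 \<le> t" for t a
  proof -
    have "((\<lambda>s. (mat_exp ((t - s) *\<^sub>R A) *v (f s - A *v x s)) $ a) has_integral x t $ a) {0..t}"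
      by (rule voc[OF t fint[OF t] fm[OF t]]) (simp add: xint)
    moreover have "f s - A *v x s = Bu *v u s + Bv *v v s" for s
    proof -
      have "f s = A *v x s + (Bu *v u s + Bv *v v s)"
        unfolding f_def v_def by (simp only: add.assoc add.commute[of "Bv *v _" "Bu *v _"])
      then show ?thesis by simp
    qed
    ultimately show ?thesis by simp
  qed
  have Gdiag: "(G *v zbar) $ q = G $ q $ q * zbar $ q" for q
  proof -
    have e: "G $ q $ j * zbar $ j = (if q = j then G $ q $ q * zbar $ q else 0)" for j
      by (auto simp: G_def gamma_psi_def)
    have "(G *v zbar) $ q = (\<Sum>j\<in>UNIV. if q = j then G $ q $ q * zbar $ q else 0)"
      unfolding matrix_vector_mult_def vec_lambda_beta by (rule sum.cong[OF refl e])
    also have "\<dots> = G $ q $ q * zbar $ q" by simp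
    finally show ?thesis .
  qed
  have vb: "\<bar>v s $ q\<bar> \<le> (G *v zbar) $ q" if "\<bar>(Cz *v x s) $ q\<bar> \<le> zbar $ q" for s q
  proof -
    have zq: "0 < zbar $ q" using zbar_pos by auto
    note pb = psi_bound[OF zq that, of "phis $ q"]
    have Gq: "G $ q $ q = Sup {\<bar>(sin (phis $ q + s) - sin (phis $ q)) / s - cos (phis $ q)\<bar> |s. 0 < \<bar>s\<bar> \<and> \<bar>s\<bar> \<le> zbar $ q}"
      by (simp add: G_def gamma_psi_def)
    have "\<bar>v s $ q\<bar> \<le> G $ q $ q * \<bar>(Cz *v x s) $ q\<bar>"
      using pb(1) unfolding Gq by (simp add: v_def psi_def)
    also have "\<dots> \<le> G $ q $ q * zbar $ q"
      using pb(2) that unfolding Gq by (intro mult_left_mono) auto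
    finally show ?thesis by (simp add: Gdiag)
  qed
  have zbound: "\<bar>(Cz *v x t) $ i\<bar> \<le> (gain Cz A Bu *v ubar + gain Cz A Bv *v (G *v zbar)) $ i"
    if t: "0 \<le> t" and zb: "\<And>s j. s \<in> {0..t} \<Longrightarrow> \<bar>(Cz *v x s) $ j\<bar> \<le> zbar $ j" for t i
    by (rule out_bound[OF t int_zu int_zv uleb[OF t] vleb[OF t] ub _ output_repr[where x=x and t=t, OF repx[OF t]]])
       (auto intro!: vb zb)
  have c1: "(gain Cz A Bu *v ubar + gain Cz A Bv *v (G *v zbar)) $ i < zbar $ i" for i
  proof -
    have "((mat 1 - gain Cz A Bv ** G) *v zbar) $ i = zbar $ i - (gain Cz A Bv *v (G *v zbar)) $ i"
      by (simp only: matrix_vector_mult_diff_rdistrib matrix_vector_mul_lid matrix_vector_mul_assoc[symmetric] vector_minus_component)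
    then show ?thesis using cond1[rule_format, of i] unfolding G_def vector_add_component by linarith
  qed
  have zlt: "\<bar>(Cz *v x t) $ i\<bar> < zbar $ i" if t: "0 \<le> t" for t i
  proof (rule ccontr)
    assume "\<not> ?thesis"
    then have t0i: "zbar $ i \<le> \<bar>(Cz *v x t) $ i\<bar>" by simp
    let ?z = "\<lambda>s j. \<bar>(Cz *v x s) $ j\<bar>"
    define S where "S = (\<Union>j. {0..t} \<inter> (\<lambda>s. ?z s j) -` {zbar $ j..})"
    have Sdef: "s \<in> S \<longleftrightarrow> s \<in> {0..t} \<and> (\<exists>j. zbar $ j \<le> ?z s j)" for s
      by (auto simp: S_def)
    have zc: "continuous_on {0..T} (\<lambda>s. ?z s j)" if "0 \<le> T" for T j
      by (intro continuous_on_rabs comp_cont[OF xcont[OF that]])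
    have Sc: "closed S" unfolding S_def
      by (intro closed_Union finite_imageI finite ballI)
         (auto intro!: continuous_closed_preimage zc t)
    have Sne: "S \<noteq> {}" using t t0i Sdef by auto
    have Sbdd: "bdd_below S" by (rule bdd_belowI[of _ 0]) (auto simp: Sdef)
    define T where "T = Inf S"
    have TS: "T \<in> S" unfolding T_def by (rule closed_contains_Inf[OF Sne Sbdd Sc])
    then obtain i1 where T0: "0 \<le> T" "T \<le> t" and Ti1: "zbar $ i1 \<le> ?z T i1" by (auto simp: Sdef)
    have "T \<noteq> 0"
    proof
      assume "T = 0"
      then have "?z T i1 = 0" by (simp add: x0)
      with Ti1 zbar_pos show False by (metis not_le)
    qed
    with T0 have Tpos: "0 < T" by simp
    have below: "?z s j < zbar $ j" if s: "s \<in> {0..<T}" for s j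
    proof (rule ccontr)
      assume "\<not> ?z s j < zbar $ j"
      then have "s \<in> S" using s T0 by (auto simp: Sdef intro!: exI[of _ j])
      then have "T \<le> s" unfolding T_def by (rule cInf_lower[OF _ Sbdd])
      with s show False by simp
    qed
    have upto: "?z s j \<le> zbar $ j" if s: "s \<in> {0..T}" for s j
    proof -
      have cl: "closed ({0..T} \<inter> (\<lambda>s. ?z s j) -` {..zbar $ j})"
        by (intro continuous_closed_preimage zc T0) auto
      have "{0..<T} \<subseteq> {0..T} \<inter> (\<lambda>s. ?z s j) -` {..zbar $ j}"
        using below by (auto simp: less_imp_le)
      then have "closure {0..<T} \<subseteq> {0..T} \<inter> (\<lambda>s. ?z s j) -` {..zbar $ j}"
        by (rule closure_minimal[OF _ cl])
      moreover have "closure {0..<T} = {0..T}" using Tpos by simp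
      ultimately show ?thesis using s by auto
    qed
    have "?z T i1 \<le> (gain Cz A Bu *v ubar + gain Cz A Bv *v (G *v zbar)) $ i1"
      by (rule zbound[OF T0(1) upto])
    with c1[of i1] Ti1 show False by simp
  qed
  show "linf_le (\<lambda>t. Cz *v x t) zbar"
    by (rule linf_leI) (use zlt in \<open>auto intro: less_imp_le\<close>)
  show "linf_le (\<lambda>t. Cy *v x t) ybar"
  proof (rule linf_leI)
    fix t i assume t: "0 \<le> (t::real)"
    have "\<bar>(Cy *v x t) $ i\<bar> \<le> (gain Cy A Bu *v ubar + gain Cy A Bv *v (G *v zbar)) $ i"
      by (rule out_bound[OF t int_yu int_yv uleb[OF t] vleb[OF t] ub _ output_repr[where x=x and t=t, OF repx[OF t]]])
         (auto intro!: vb intro: less_imp_le zlt)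
    also have "\<dots> \<le> ybar $ i" using cond2 by (simp add: G_def)
    finally show "\<bar>(Cy *v x t) $ i\<bar> \<le> ybar $ i" .
  qed
qed

end
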